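(* Fix $0<d<1$ and let $c(x)=x^d$. For common slot instances, the price of anarchy of the coordination mechanism described in the context is $\Theta(1)$; that is, there is a constant $K_d$ depending only on $d$ such that for every common slot instance with cost function $c$ and every Nash equilibrium $(s,\xi)$ of the mechanism, $C(s)\le K_d\cdot\min_{s^*}C(s^* )$.
   Context: A game consists of a cost function $c$ (here $c(x)=x^d$, $c(0)=0$), slots $t=1,\dots,T$, and a set of jobs, each job $j$ having integer release time $r_j$ and deadline $d_j$ with $0<r_j<d_j<T$. A common slot instance is one in which some slot lies in $[r_j,d_j)$ for every job $j$ (equivalently, an optimal assignment uses a single slot). An assignment $s$ gives each job a slot $s_j$ with $r_j\le s_j<d_j$; the load is $l_t(s)=|\{j:s_j=t\}|$ and $C(s)=\sum_{t=1}^T c(l_t(s))$; the minimum is over all assignments. In the coordination mechanism, each job $j$ chooses a pair $(s_j,\xi_j)$ with $s_j\in[r_j,d_j)$ and payment $\xi_j\ge0$. Slot $t$ is opened iff $\sum_{j:s_j=t}\xi_j\ge c(l_t(s))$; a job whose slot is not opened has infinite cost, otherwise its cost is $\xi_j$. A profile $(s,\xi)$ is a Nash equilibrium if for every job $j$: (i) $\sum_{j':s_{j'}=s_j}\xi_{j'}\ge c(l_{s_j}(s))$; (ii) for every $t\in[r_j,d_j)\setminus\{s_j\}$, $\xi_j\le\max\{0,\,c(l_t(s)+1)-\sum_{j':s_{j'}=t}\xi_{j'}\}$; (iii) $\xi_j\le\max\{0,\,c(l_{s_j}(s))-\sum_{j':s_{j'}=s_j,\,j'\ne j}\xi_{j'}\}$.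 *)

theory Defs
  imports Complex_Main
begin

definition cst :: "real \<Rightarrow> nat \<Rightarrow> real" where
  "cst d x = (real x) powr d"   \<comment> \<open>c(x) = x^d, with c(0) = 0\<close>

definition valid_instance :: "nat \<Rightarrow> nat set \<Rightarrow> (nat \<Rightarrow> nat) \<Rightarrow> (nat \<Rightarrow> nat) \<Rightarrow> bool" where
  "valid_instance T J r dl \<longleftrightarrow> finite J \<and> (\<forall>j\<in>J. 0 < r j \<and> r j < dl j \<and> dl j < T)"

definition common_slot :: "nat set \<Rightarrow> (nat \<Rightarrow> nat) \<Rightarrow> (nat \<Rightarrow> nat) \<Rightarrow> bool" where
  "common_slot J r dl \<longleftrightarrow> (\<exists>t. \<forall>j\<in>J. r j \<le> t \<and> t < dl j)"

definition feasible :: "nat set \<Rightarrow> (nat \<Rightarrow> nat) \<Rightarrow> (nat \<Rightarrow> nat) \<Rightarrow> (nat \<Rightarrow> nat) \<Rightarrow> bool" where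
  "feasible J r dl s \<longleftrightarrow> (\<forall>j\<in>J. r j \<le> s j \<and> s j < dl j)"

definition load :: "nat set \<Rightarrow> (nat \<Rightarrow> nat) \<Rightarrow> nat \<Rightarrow> nat" where
  "load J s t = card {j\<in>J. s j = t}"

definition total_cost :: "real \<Rightarrow> nat \<Rightarrow> nat set \<Rightarrow> (nat \<Rightarrow> nat) \<Rightarrow> real" where
  "total_cost d T J s = (\<Sum>t=1..T. cst d (load J s t))"

definition paid :: "nat set \<Rightarrow> (nat \<Rightarrow> nat) \<Rightarrow> (nat \<Rightarrow> real) \<Rightarrow> nat \<Rightarrow> real" where
  "paid J s \<xi> t = (\<Sum>j\<in>{j\<in>J. s j = t}. \<xi> j)"

definition nash_eq :: "real \<Rightarrow> nat set \<Rightarrow> (nat \<Rightarrow> nat) \<Rightarrow> (nat \<Rightarrow> nat) \<Rightarrow> (nat \<Rightarrow> nat) \<Rightarrow> (nat \<Rightarrow> real) \<Rightarrow> bool" where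
  "nash_eq d J r dl s \<xi> \<longleftrightarrow> feasible J r dl s \<and> (\<forall>j\<in>J. \<xi> j \<ge> 0) \<and>
     (\<forall>j\<in>J.
        paid J s \<xi> (s j) \<ge> cst d (load J s (s j)) \<and>
        (\<forall>t. r j \<le> t \<and> t < dl j \<and> t \<noteq> s j \<longrightarrow>
              \<xi> j \<le> max 0 (cst d (load J s t + 1) - paid J s \<xi> t)) \<and>
        \<xi> j \<le> max 0 (cst d (load J s (s j)) - (\<Sum>j'\<in>{j'\<in>J. s j' = s j \<and> j' \<noteq> j}. \<xi> j')))"

end

theory Submission
  imports Defs "HOL-Analysis.Convex"
begin
lemma key_real:
  fixes d l m :: real
  assumes d0: "0 < d" and d1: "d < 1" and l1: "1 \<le> l" and m1: "1 \<le> m"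
    and h: "l powr d \<le> l * ((m+1) powr d - m powr d)"
  shows "m powr d \<le> d powr (d/(1-d)) * l powr d"
proof -
  have Y: "(m+1) powr d * m powr (1-d) \<le> d*(m+1) + (1-d)*m"
    using Youngs_inequality_0[of d "1-d" "m+1" m] d0 d1 m1 by simp
  have mp: "m powr (1-d) = m / m powr d" using m1 by (simp add: powr_diff)
  have mdpos: "m powr d > 0" using m1 by simp
  have "(m+1) powr d * m \<le> (m + d) * m powr d"
    using Y mp mdpos by (simp add: field_simps)
  hence A: "(m+1) powr d - m powr d \<le> d * m powr d / m"
    using m1 by (simp add: field_simps)
  have "l powr d \<le> l * (d * m powr d / m)"
    using h A l1 by (meson dual_order.trans le_numeral_extra(1) mult_left_mono order_trans zero_le_one linear) 
  hence B: "m * l powr d \<le> d * l * m powr d" using m1 by (simp add: field_simps)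
  have lp: "l = l powr (1-d) * l powr d" using l1 by (simp add: powr_add[symmetric])
  have mq: "m = m powr (1-d) * m powr d" using m1 by (simp add: powr_add[symmetric])
  have "m powr (1-d) * (m powr d * l powr d) \<le> (d * l powr (1-d)) * (m powr d * l powr d)"
    using B lp mq by (smt (verit) mult.assoc mult.commute)
  hence C: "m powr (1-d) \<le> d * l powr (1-d)"
    using mdpos l1 by (simp add: mult_le_cancel_right)
  have "(m powr (1-d)) powr (1/(1-d)) \<le> (d * l powr (1-d)) powr (1/(1-d))"
    using C d1 m1 by (intro powr_mono2) auto
  hence "m \<le> d powr (1/(1-d)) * l"
    using d0 d1 m1 l1 by (simp add: powr_powr powr_mult)
  hence "m powr d \<le> (d powr (1/(1-d)) * l) powr d"
    using d0 m1 by (intro powr_mono2) auto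
  also have "\<dots> = d powr (d/(1-d)) * l powr d"
    using d0 l1 by (simp add: powr_mult powr_powr)
  finally show ?thesis .
qed

lemma series:
  fixes g :: "nat \<Rightarrow> real" and \<rho> :: real
  assumes nn: "\<And>k. g k \<ge> 0" and r0: "0 \<le> \<rho>" and r1: "\<rho> < 1"
    and st: "\<And>k i. i < k \<Longrightarrow> g k \<noteq> 0 \<Longrightarrow> g i \<le> \<rho> * g k"
  shows "\<exists>m\<le>N. (\<Sum>k\<le>N. g k) \<le> g m / (1-\<rho>)"
proof (induction N)
  case 0
  have "g 0 \<le> g 0 / (1-\<rho>)" using nn[of 0] r0 r1 by (simp add: field_simps)
  then show ?case by auto
next
  case (Suc N)
  then obtain m where m: "m \<le> N" "(\<Sum>k\<le>N. g k) \<le> g m / (1-\<rho>)" by auto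
  show ?case
  proof (cases "g (Suc N) = 0")
    case True
    then show ?thesis using m by (intro exI[of _ m]) auto
  next
    case False
    have "g m \<le> \<rho> * g (Suc N)" using st[of m "Suc N"] m False by auto
    hence "g m / (1-\<rho>) \<le> \<rho> * g (Suc N) / (1-\<rho>)" using r1 by (simp add: divide_right_mono)
    hence "(\<Sum>k\<le>Suc N. g k) \<le> \<rho> * g (Suc N) / (1-\<rho>) + g (Suc N)" using m by simp
    also have "\<dots> = g (Suc N) / (1-\<rho>)" using r1 by (simp add: field_simps)
    finally show ?thesis by (intro exI[of _ "Suc N"]) auto
  qed
qed

lemma cst_nonneg: "cst d x \<ge> 0" by (simp add: cst_def)

lemma cst_mono: "0 \<le> d \<Longrightarrow> x \<le> y \<Longrightarrow> cst d x \<le> cst d y"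
  by (simp add: cst_def powr_mono2)

lemma slot_bound:
  assumes ne: "nash_eq d J r dl s \<xi>" and fin: "finite J" and d0: "0 < d"
    and ab: "a \<noteq> b" and win: "\<forall>j\<in>J. s j = a \<longrightarrow> r j \<le> b \<and> b < dl j"
  shows "cst d (load J s a) \<le> load J s a * (cst d (load J s b + 1) - cst d (load J s b))"
proof (cases "load J s a = 0")
  case True then show ?thesis by (simp add: cst_def)
next
  case False
  define A where "A = {j\<in>J. s j = a}"
  have finA: "finite A" using fin A_def by simp
  have "A \<noteq> {}" using False unfolding load_def A_def by (metis card.empty)
  then obtain j0 where j0: "j0 \<in> J" "s j0 = a" unfolding A_def by auto
  have pb: "paid J s \<xi> b \<ge> cst d (load J s b)"
  proof (cases "load J s b = 0")
    case True
    hence "{j\<in>J. s j = b} = {}" using fin unfolding load_def by simp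
    then have "paid J s \<xi> b = 0" unfolding paid_def by (metis (no_types, lifting) sum.empty)
    then show ?thesis using True by (simp add: cst_def)
  next
    case False
    then obtain j1 where "j1 \<in> J" "s j1 = b" unfolding load_def by (metis (mono_tags, lifting) card.empty empty_Collect_eq)
    then show ?thesis using ne unfolding nash_eq_def by metis
  qed
  have dpos: "cst d (load J s b + 1) - cst d (load J s b) \<ge> 0" using cst_mono[of d] d0 by simp
  have xi: "\<xi> j \<le> cst d (load J s b + 1) - cst d (load J s b)" if "j \<in> A" for j
  proof -
    have jj: "j \<in> J" "s j = a" using that A_def by auto
    have "\<xi> j \<le> max 0 (cst d (load J s b + 1) - paid J s \<xi> b)"
      using ne jj win ab unfolding nash_eq_def by auto
    then show ?thesis using pb dpos by linarith
  qed
  have "cst d (load J s a) \<le> paid J s \<xi> a" using ne j0 unfolding nash_eq_def by metis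
  also have "\<dots> = (\<Sum>j\<in>A. \<xi> j)" unfolding paid_def A_def by simp
  also have "\<dots> \<le> (\<Sum>j\<in>A. cst d (load J s b + 1) - cst d (load J s b))"
    by (rule sum_mono) (use xi in auto)
  also have "\<dots> = load J s a * (cst d (load J s b + 1) - cst d (load J s b))"
    unfolding load_def A_def by simp
  finally show ?thesis .
qed

lemma pair_bound:
  assumes ne: "nash_eq d J r dl s \<xi>" and fin: "finite J" and d0: "0 < d" and d1: "d < 1"
    and ab: "a \<noteq> b" and win: "\<forall>j\<in>J. s j = a \<longrightarrow> r j \<le> b \<and> b < dl j"
    and pos: "load J s a > 0"
  shows "cst d (load J s b) \<le> d powr (d/(1-d)) * cst d (load J s a)"
proof (cases "load J s b = 0")
  case True then show ?thesis by (simp add: cst_def)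
next
  case False
  have h: "cst d (load J s a) \<le> load J s a * (cst d (load J s b + 1) - cst d (load J s b))"
    using slot_bound[OF ne fin d0 ab win] .
  have "real (load J s b) powr d \<le> d powr (d/(1-d)) * real (load J s a) powr d"
    using h pos False d0 d1
    by (intro key_real) (auto simp: cst_def add.commute)
  then show ?thesis by (simp add: cst_def)
qed

lemma load_le: "finite J \<Longrightarrow> load J s t \<le> card J"
  unfolding load_def by (rule card_mono) auto

lemma sum_loads:
  assumes "finite J" "s ` J \<subseteq> {1..T}"
  shows "(\<Sum>t=1..T. real (load J s t)) = real (card J)"
proof -
  have "(\<Sum>t=1..T. load J s t) = card J"
    unfolding load_def using sum.group[OF assms(1) _ assms(2), of "\<lambda>_. 1::nat"] by simp
  then show ?thesis by (metis of_nat_sum)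
qed

lemma lower_bound:
  assumes fin: "finite J" and img: "s ` J \<subseteq> {1..T}" and d0: "0 < d" and d1: "d < 1"
  shows "cst d (card J) \<le> total_cost d T J s"
proof (cases "card J = 0")
  case True then show ?thesis unfolding total_cost_def
    by (simp add: cst_def sum_nonneg)
next
  case False
  define n where "n = card J"
  have n0: "real n > 0" using False n_def by simp
  have each: "real (load J s t) * real n powr (d-1) \<le> cst d (load J s t)" for t
  proof (cases "load J s t = 0")
    case True then show ?thesis by (simp add: cst_def)
  next
    case False
    have le: "real (load J s t) \<le> real n" using load_le[OF fin] n_def by simp
    have "real n powr (d-1) \<le> real (load J s t) powr (d-1)"
      using False le d1 by (intro powr_mono2') auto
    hence "real (load J s t) * real n powr (d-1) \<le> real (load J s t) * real (load J s t) powr (d-1)"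
      by (simp add: mult_left_mono)
    also have "\<dots> = real (load J s t) powr d"
      using False by (simp add: powr_mult_base)
    finally show ?thesis by (simp add: cst_def)
  qed
  have "cst d n = real n * real n powr (d-1)" using n0 by (simp add: cst_def powr_mult_base)
  also have "\<dots> = (\<Sum>t=1..T. real (load J s t)) * real n powr (d-1)"
    using sum_loads[OF fin img] n_def by simp
  also have "\<dots> = (\<Sum>t=1..T. real (load J s t) * real n powr (d-1))"
    by (simp add: sum_distrib_right)
  also have "\<dots> \<le> total_cost d T J s" unfolding total_cost_def
    by (rule sum_mono) (rule each)
  finally show ?thesis using n_def by simp
qed

theorem theorem5:
  fixes d :: real
  assumes "0 < d" and "d < 1"
  shows "\<exists>K::real. \<forall>T J r dl s \<xi>.
           valid_instance T J r dl \<and> common_slot J r dl \<and> nash_eq d J r dl s \<xi> \<longrightarrow>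
           (\<forall>s'. feasible J r dl s' \<longrightarrow> total_cost d T J s \<le> K * total_cost d T J s')"
proof -
  note d0 = assms(1) and d1 = assms(2)
  define \<rho> where "\<rho> = d powr (d/(1-d))"
  have r0: "0 \<le> \<rho>" unfolding \<rho>_def by simp
  have "d powr (d/(1-d)) < 1 powr (d/(1-d))"
    using d0 d1 by (intro powr_less_mono2) auto
  hence r1: "\<rho> < 1" unfolding \<rho>_def by simp
  have K0: "0 \<le> 2/(1-\<rho>)" using r1 by simp
  show ?thesis
  proof (intro exI[of _ "2/(1-\<rho>)"] allI impI)
    fix T J r dl s \<xi> s'
    assume H: "valid_instance T J r dl \<and> common_slot J r dl \<and> nash_eq d J r dl s \<xi>"
      and F: "feasible J r dl s'"
    have fin: "finite J" and rJ: "\<forall>j\<in>J. 0 < r j \<and> r j < dl j \<and> dl j < T"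
      using H unfolding valid_instance_def by auto
    obtain t0 where t0: "\<forall>j\<in>J. r j \<le> t0 \<and> t0 < dl j" using H unfolding common_slot_def by auto
    have ne: "nash_eq d J r dl s \<xi>" using H by simp
    have fs: "\<forall>j\<in>J. r j \<le> s j \<and> s j < dl j" using ne unfolding nash_eq_def feasible_def by auto
    define n where "n = card J"
    define f where "f t = cst d (load J s t)" for t
    have fn: "f t \<le> cst d n" for t
      unfolding f_def n_def using load_le[OF fin] d0 by (intro cst_mono) auto
    have fnn: "f t \<ge> 0" for t unfolding f_def by (rule cst_nonneg)
    have pos_obtain: "\<exists>j\<in>J. s j = t" if "f t \<noteq> 0" for t
    proof -
      have "load J s t \<noteq> 0" using that unfolding f_def by (auto simp: cst_def)
      then show ?thesis unfolding load_def by (metis (mono_tags, lifting) card.empty empty_Collect_eq)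
    qed
    have posl: "load J s t > 0" if "f t \<noteq> 0" for t
      using that unfolding f_def by (auto simp: cst_def)
    define gL where "gL k = f (t0 - k)" for k
    have stL: "gL i \<le> \<rho> * gL k" if ik: "i < k" and gk: "gL k \<noteq> 0" for k i
    proof -
      obtain j where j: "j \<in> J" "s j = t0 - k" using pos_obtain[of "t0-k"] gk unfolding gL_def by blast
      have "k < t0" using j fs rJ by force
      have win: "\<forall>j\<in>J. s j = t0 - k \<longrightarrow> r j \<le> t0 - i \<and> t0 - i < dl j"
        using fs t0 \<open>k < t0\<close> \<open>i < k\<close> by force
      show ?thesis unfolding gL_def f_def \<rho>_def
        by (rule pair_bound[OF ne fin d0 d1 _ win]) (use \<open>k < t0\<close> \<open>i < k\<close> posl gk gL_def in auto)
    qed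
    obtain mL where mL: "(\<Sum>k\<le>t0. gL k) \<le> gL mL / (1-\<rho>)"
      using series[of gL \<rho> t0] stL r0 r1 fnn unfolding gL_def by blast
    define gR where "gR k = f (t0 + k)" for k
    have stR: "gR i \<le> \<rho> * gR k" if ik: "i < k" and gk: "gR k \<noteq> 0" for k i
    proof -
      have win: "\<forall>j\<in>J. s j = t0 + k \<longrightarrow> r j \<le> t0 + i \<and> t0 + i < dl j"
        using fs t0 \<open>i < k\<close> by force
      show ?thesis unfolding gR_def f_def \<rho>_def
        by (rule pair_bound[OF ne fin d0 d1 _ win]) (use \<open>i < k\<close> posl gk gR_def in auto)
    qed
    obtain mR where mR: "(\<Sum>k\<le>T. gR k) \<le> gR mR / (1-\<rho>)"
      using series[of gR \<rho> T] stR r0 r1 fnn unfolding gR_def by blast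
    have eqL: "(\<Sum>t\<in>{0..t0}. f t) = (\<Sum>k\<le>t0. gL k)"
      unfolding gL_def by (rule sum.reindex_bij_witness[of _ "\<lambda>k. t0-k" "\<lambda>k. t0-k"]) auto
    have eqR: "(\<Sum>t\<in>{t0..t0+T}. f t) = (\<Sum>k\<le>T. gR k)"
      unfolding gR_def by (rule sum.reindex_bij_witness[of _ "\<lambda>k. t0+k" "\<lambda>t. t-t0"]) auto
    have "total_cost d T J s = (\<Sum>t\<in>{1..T}. f t)" unfolding total_cost_def f_def by simp
    also have "\<dots> \<le> (\<Sum>t\<in>{0..t0} \<union> {t0..t0+T}. f t)"
      by (rule sum_mono2) (auto simp: fnn)
    also have "\<dots> \<le> (\<Sum>t\<in>{0..t0}. f t) + (\<Sum>t\<in>{t0..t0+T}. f t)"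
    proof -
      have "(\<Sum>t\<in>{0..t0} \<union> {t0..t0+T}. f t) + (\<Sum>t\<in>{0..t0} \<inter> {t0..t0+T}. f t)
            = (\<Sum>t\<in>{0..t0}. f t) + (\<Sum>t\<in>{t0..t0+T}. f t)"
        by (rule sum.union_inter) auto
      moreover have "(\<Sum>t\<in>{0..t0} \<inter> {t0..t0+T}. f t) \<ge> 0" by (rule sum_nonneg) (simp add: fnn)
      ultimately show ?thesis by linarith
    qed
    also have "\<dots> \<le> gL mL / (1-\<rho>) + gR mR / (1-\<rho>)" using eqL eqR mL mR by simp
    also have "\<dots> \<le> cst d n / (1-\<rho>) + cst d n / (1-\<rho>)"
      using fn r1 unfolding gL_def gR_def by (intro add_mono divide_right_mono) auto
    also have "\<dots> = 2/(1-\<rho>) * cst d n" by simp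
    also have "\<dots> \<le> 2/(1-\<rho>) * total_cost d T J s'"
    proof (rule mult_left_mono[OF _ K0])
      have "s' ` J \<subseteq> {1..T}" using F rJ unfolding feasible_def by force
      then show "cst d n \<le> total_cost d T J s'" unfolding n_def
        using lower_bound[OF fin _ d0 d1] by blast
    qed
    finally show "total_cost d T J s \<le> 2/(1-\<rho>) * total_cost d T J s'" .
  qed
qed
end
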